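(* A semiring $S$ is a nil-extension of a rectangular skew-ring if and only if $S$ is a completely Archimedean semiring and $E^+(S)$ is a subsemigroup of $(S,+)$.
   Context: A semiring $(S,+,\cdot)$ has two associative operations with $a(b+c)=ab+ac$, $(b+c)a=ba+ca$. $na$ denotes the $n$-fold sum of $a$. $E^+(S)$ is the set of additive idempotents. $a$ is additively regular if $a=a+x+a$ for some $x$; $a$ is completely regular if there is $x$ with $a=a+x+a$, $a+x=x+a$, $a(a+x)=a+x$; $S$ is quasi completely regular if for each $a$ some $na$ is completely regular. $\mathscr{J}^+$ is Green's $\mathscr{J}$-relation on $(S,+)$. For $a\in S$ let $m(a)$ be the least positive integer with $m(a)a$ additively regular; $a\,\mathscr{J}^{*^{+}}\,b$ iff $m(a)a\,\mathscr{J}^+\,m(b)b$. A completely Archimedean semiring is a quasi completely regular semiring with $\mathscr{J}^{*^{+}}=S\times S$. A completely simple semiring is a semiring all of whose elements are completely regular and with $\mathscr{J}^+=S\times S$. A rectangular skew-ring is a completely simple semiring $K$ with $E^+(K)$ a subsemigroup of $(K,+)$. $S$ is a nil-extension of a subsemiring $K$ if $K$ is a bi-ideal of $S$ (for $a\in K$, $x\in S$: $a+x,x+a,ax,xa\in K$) and for every $a\in S$ some $na\in K$. *)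

theory Defs
  imports Main
begin

text \<open>Semirings are given by a carrier set S with two binary operations
  (addition not assumed commutative, no zero/one assumed).\<close>

definition semiring :: "'a set \<Rightarrow> ('a \<Rightarrow> 'a \<Rightarrow> 'a) \<Rightarrow> ('a \<Rightarrow> 'a \<Rightarrow> 'a) \<Rightarrow> bool" where
  "semiring S add mul \<longleftrightarrow>
     (\<forall>a\<in>S. \<forall>b\<in>S. add a b \<in> S \<and> mul a b \<in> S) \<and>
     (\<forall>a\<in>S. \<forall>b\<in>S. \<forall>c\<in>S. add (add a b) c = add a (add b c)) \<and>
     (\<forall>a\<in>S. \<forall>b\<in>S. \<forall>c\<in>S. mul (mul a b) c = mul a (mul b c)) \<and>
     (\<forall>a\<in>S. \<forall>b\<in>S. \<forall>c\<in>S. mul a (add b c) = add (mul a b) (mul a c)) \<and>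
     (\<forall>a\<in>S. \<forall>b\<in>S. \<forall>c\<in>S. mul (add b c) a = add (mul b a) (mul c a))"

text \<open>n-fold sum n a (meaningful for n \<ge> 1; for n = 0 it is just a).\<close>
fun nsum :: "('a \<Rightarrow> 'a \<Rightarrow> 'a) \<Rightarrow> nat \<Rightarrow> 'a \<Rightarrow> 'a" where
  "nsum add 0 a = a"
| "nsum add (Suc 0) a = a"
| "nsum add (Suc (Suc n)) a = add (nsum add (Suc n) a) a"

definition add_idempotents :: "'a set \<Rightarrow> ('a \<Rightarrow> 'a \<Rightarrow> 'a) \<Rightarrow> 'a set" where
  "add_idempotents S add = {e \<in> S. add e e = e}"

definition add_subsemigroup :: "'a set \<Rightarrow> 'a set \<Rightarrow> ('a \<Rightarrow> 'a \<Rightarrow> 'a) \<Rightarrow> bool" where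
  "add_subsemigroup T S add \<longleftrightarrow> T \<subseteq> S \<and> (\<forall>a\<in>T. \<forall>b\<in>T. add a b \<in> T)"

definition add_regular :: "'a set \<Rightarrow> ('a \<Rightarrow> 'a \<Rightarrow> 'a) \<Rightarrow> 'a \<Rightarrow> bool" where
  "add_regular S add a \<longleftrightarrow> (\<exists>x\<in>S. a = add (add a x) a)"

definition completely_regular ::
  "'a set \<Rightarrow> ('a \<Rightarrow> 'a \<Rightarrow> 'a) \<Rightarrow> ('a \<Rightarrow> 'a \<Rightarrow> 'a) \<Rightarrow> 'a \<Rightarrow> bool" where
  "completely_regular S add mul a \<longleftrightarrow>
     (\<exists>x\<in>S. a = add (add a x) a \<and> add a x = add x a \<and> mul a (add a x) = add a x)"

definition quasi_completely_regular ::
  "'a set \<Rightarrow> ('a \<Rightarrow> 'a \<Rightarrow> 'a) \<Rightarrow> ('a \<Rightarrow> 'a \<Rightarrow> 'a) \<Rightarrow> bool" where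
  "quasi_completely_regular S add mul \<longleftrightarrow> semiring S add mul \<and>
     (\<forall>a\<in>S. \<exists>n\<ge>1. completely_regular S add mul (nsum add n a))"

text \<open>Principal two-sided ideal of a in the semigroup (S,+), i.e. S^1 + a + S^1.\<close>
definition add_principal_ideal :: "'a set \<Rightarrow> ('a \<Rightarrow> 'a \<Rightarrow> 'a) \<Rightarrow> 'a \<Rightarrow> 'a set" where
  "add_principal_ideal S add a =
     {a} \<union> {add s a | s. s \<in> S} \<union> {add a t | t. t \<in> S} \<union> {add (add s a) t | s t. s \<in> S \<and> t \<in> S}"

definition addJ :: "'a set \<Rightarrow> ('a \<Rightarrow> 'a \<Rightarrow> 'a) \<Rightarrow> 'a \<Rightarrow> 'a \<Rightarrow> bool" where
  "addJ S add a b \<longleftrightarrow> a \<in> S \<and> b \<in> S \<and> add_principal_ideal S add a = add_principal_ideal S add b"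

definition mreg :: "'a set \<Rightarrow> ('a \<Rightarrow> 'a \<Rightarrow> 'a) \<Rightarrow> 'a \<Rightarrow> nat" where
  "mreg S add a = (LEAST n. n \<ge> 1 \<and> add_regular S add (nsum add n a))"

definition addJstar :: "'a set \<Rightarrow> ('a \<Rightarrow> 'a \<Rightarrow> 'a) \<Rightarrow> 'a \<Rightarrow> 'a \<Rightarrow> bool" where
  "addJstar S add a b \<longleftrightarrow>
     addJ S add (nsum add (mreg S add a) a) (nsum add (mreg S add b) b)"

definition completely_archimedean ::
  "'a set \<Rightarrow> ('a \<Rightarrow> 'a \<Rightarrow> 'a) \<Rightarrow> ('a \<Rightarrow> 'a \<Rightarrow> 'a) \<Rightarrow> bool" where
  "completely_archimedean S add mul \<longleftrightarrow> quasi_completely_regular S add mul \<and>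
     (\<forall>a\<in>S. \<forall>b\<in>S. addJstar S add a b)"

definition completely_simple ::
  "'a set \<Rightarrow> ('a \<Rightarrow> 'a \<Rightarrow> 'a) \<Rightarrow> ('a \<Rightarrow> 'a \<Rightarrow> 'a) \<Rightarrow> bool" where
  "completely_simple K add mul \<longleftrightarrow> semiring K add mul \<and>
     (\<forall>a\<in>K. completely_regular K add mul a) \<and>
     (\<forall>a\<in>K. \<forall>b\<in>K. addJ K add a b)"

definition rectangular_skew_ring ::
  "'a set \<Rightarrow> ('a \<Rightarrow> 'a \<Rightarrow> 'a) \<Rightarrow> ('a \<Rightarrow> 'a \<Rightarrow> 'a) \<Rightarrow> bool" where
  "rectangular_skew_ring K add mul \<longleftrightarrow> completely_simple K add mul \<and>
     add_subsemigroup (add_idempotents K add) K add"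

definition bi_ideal :: "'a set \<Rightarrow> 'a set \<Rightarrow> ('a \<Rightarrow> 'a \<Rightarrow> 'a) \<Rightarrow> ('a \<Rightarrow> 'a \<Rightarrow> 'a) \<Rightarrow> bool" where
  "bi_ideal K S add mul \<longleftrightarrow> K \<subseteq> S \<and>
     (\<forall>a\<in>K. \<forall>x\<in>S. add a x \<in> K \<and> add x a \<in> K \<and> mul a x \<in> K \<and> mul x a \<in> K)"

definition nil_extension ::
  "'a set \<Rightarrow> 'a set \<Rightarrow> ('a \<Rightarrow> 'a \<Rightarrow> 'a) \<Rightarrow> ('a \<Rightarrow> 'a \<Rightarrow> 'a) \<Rightarrow> bool" where
  "nil_extension S K add mul \<longleftrightarrow> K \<subseteq> S \<and> semiring K add mul \<and> bi_ideal K S add mul \<and>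
     (\<forall>a\<in>S. \<exists>n\<ge>1. nsum add n a \<in> K)"

end

theory Submission
  imports Defs
begin


lemma pi_mem: "z \<in> add_principal_ideal T add a \<longleftrightarrow> z = a \<or> (\<exists>s\<in>T. z = add s a) \<or> (\<exists>t\<in>T. z = add a t)
   \<or> (\<exists>s\<in>T. \<exists>t\<in>T. z = add (add s a) t)"
  unfolding add_principal_ideal_def by blast

lemma pi_trans:
  assumes cl: "\<And>a b. a\<in>T \<Longrightarrow> b\<in>T \<Longrightarrow> add a b \<in> T"
    and as: "\<And>a b c. a\<in>T \<Longrightarrow> b\<in>T \<Longrightarrow> c\<in>T \<Longrightarrow> add (add a b) c = add a (add b c)"
    and b: "b \<in> add_principal_ideal T add a" and a: "a \<in> T"
  shows "add_principal_ideal T add b \<subseteq> add_principal_ideal T add a"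
proof
  fix z assume z: "z \<in> add_principal_ideal T add b"
  have L: "\<And>s. s\<in>T \<Longrightarrow> add s a \<in> add_principal_ideal T add a" 
   and R: "\<And>s. s\<in>T \<Longrightarrow> add a s \<in> add_principal_ideal T add a"
   and LR: "\<And>s t. s\<in>T \<Longrightarrow> t \<in> T \<Longrightarrow> add (add s a) t \<in> add_principal_ideal T add a"
    unfolding pi_mem by blast+
  from b have "b = a \<or> (\<exists>s\<in>T. b = add s a) \<or> (\<exists>t\<in>T. b = add a t)
   \<or> (\<exists>s\<in>T. \<exists>t\<in>T. b = add (add s a) t)" unfolding pi_mem .
  moreover from z have "z = b \<or> (\<exists>s\<in>T. z = add s b) \<or> (\<exists>t\<in>T. z = add b t)
   \<or> (\<exists>s\<in>T. \<exists>t\<in>T. z = add (add s b) t)" unfolding pi_mem .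
  ultimately show "z \<in> add_principal_ideal T add a"
  proof (elim disjE bexE)
    fix s s' assume "b = add s a" "z = add s' b" "s\<in>T" "s'\<in>T"
    hence "z = add (add s' s) a" by (simp add: as a)
    thus ?thesis using L cl \<open>s\<in>T\<close> \<open>s'\<in>T\<close> by simp
  next
    fix s s' assume "b = add s a" "z = add b s'" "s\<in>T" "s'\<in>T"
    thus ?thesis using LR by simp
  next
    fix s s' t assume "b = add s a" "z = add (add s' b) t" "s\<in>T" "s'\<in>T" "t \<in> T"
    hence "z = add (add (add s' s) a) t" by (simp add: as a)
    thus ?thesis using LR cl \<open>s\<in>T\<close> \<open>s'\<in>T\<close> \<open>t\<in>T\<close> by simp
  next
    fix s s' assume "b = add a s" "z = add s' b" "s\<in>T" "s'\<in>T"
    hence "z = add (add s' a) s" by (simp add: as a)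
    thus ?thesis using LR \<open>s\<in>T\<close> \<open>s'\<in>T\<close> by simp
  next
    fix s s' assume "b = add a s" "z = add b s'" "s\<in>T" "s'\<in>T"
    hence "z = add a (add s s')" by (simp add: as a)
    thus ?thesis using R cl \<open>s\<in>T\<close> \<open>s'\<in>T\<close> by simp
  next
    fix s s' t assume "b = add a s" "z = add (add s' b) t" "s\<in>T" "s'\<in>T" "t \<in> T"
    hence "z = add (add s' a) (add s t)" by (simp add: as a cl)
    thus ?thesis using LR cl \<open>s\<in>T\<close> \<open>s'\<in>T\<close> \<open>t\<in>T\<close> by simp
  next
    fix s u s' assume "b = add (add s a) u" "z = add s' b" "s\<in>T" "s'\<in>T" "u\<in>T"
    hence "z = add (add (add s' s) a) u" by (simp add: as a cl)
    thus ?thesis using LR cl \<open>s\<in>T\<close> \<open>s'\<in>T\<close> \<open>u\<in>T\<close> by simp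
  next
    fix s u s' assume "b = add (add s a) u" "z = add b s'" "s\<in>T" "s'\<in>T" "u\<in>T"
    hence "z = add (add s a) (add u s')" by (simp add: as a cl)
    thus ?thesis using LR cl \<open>s\<in>T\<close> \<open>s'\<in>T\<close> \<open>u\<in>T\<close> by simp
  next
    fix s u s' t assume "b = add (add s a) u" "z = add (add s' b) t" "s\<in>T" "s'\<in>T" "u\<in>T" "t\<in>T"
    hence "z = add (add (add s' s) a) (add u t)" by (simp add: as a cl)
    thus ?thesis using LR cl \<open>s\<in>T\<close> \<open>s'\<in>T\<close> \<open>u\<in>T\<close> \<open>t\<in>T\<close> by simp
  qed (use L R LR in \<open>auto simp: pi_mem\<close>)
qed



lemma pi_mono: "T \<subseteq> T' \<Longrightarrow> add_principal_ideal T add a \<subseteq> add_principal_ideal T' add a"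
  unfolding add_principal_ideal_def by blast

lemma pi_self: "a \<in> add_principal_ideal T add a"
  unfolding add_principal_ideal_def by blast

locale sr =
  fixes S :: "'a set" and add :: "'a \<Rightarrow> 'a \<Rightarrow> 'a" (infixl "\<oplus>" 65)
    and mul :: "'a \<Rightarrow> 'a \<Rightarrow> 'a" (infixl "\<otimes>" 70)
  assumes sr: "semiring S add mul"
begin

lemma cl[simp]: "a\<in>S \<Longrightarrow> b\<in>S \<Longrightarrow> a \<oplus> b \<in> S" using sr unfolding semiring_def by blast
lemma clm[simp]: "a\<in>S \<Longrightarrow> b\<in>S \<Longrightarrow> a \<otimes> b \<in> S" using sr unfolding semiring_def by blast
lemma as: "a\<in>S \<Longrightarrow> b\<in>S \<Longrightarrow> c\<in>S \<Longrightarrow> a \<oplus> b \<oplus> c = a \<oplus> (b \<oplus> c)" using sr unfolding semiring_def by blast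
lemma asm: "a\<in>S \<Longrightarrow> b\<in>S \<Longrightarrow> c\<in>S \<Longrightarrow> a \<otimes> b \<otimes> c = a \<otimes> (b \<otimes> c)" using sr unfolding semiring_def by blast
lemma dl: "a\<in>S \<Longrightarrow> b\<in>S \<Longrightarrow> c\<in>S \<Longrightarrow> a \<otimes> (b \<oplus> c) = a \<otimes> b \<oplus> a \<otimes> c" using sr unfolding semiring_def by blast
lemma dr: "a\<in>S \<Longrightarrow> b\<in>S \<Longrightarrow> c\<in>S \<Longrightarrow> (b \<oplus> c) \<otimes> a = b \<otimes> a \<oplus> c \<otimes> a" using sr unfolding semiring_def by blast

lemma ext2: "a\<in>S \<Longrightarrow> b\<in>S \<Longrightarrow> w\<in>S \<Longrightarrow> a \<oplus> b = d \<Longrightarrow> a \<oplus> (b \<oplus> w) = d \<oplus> w"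
  using as by metis
lemma ext3: "a\<in>S \<Longrightarrow> b\<in>S \<Longrightarrow> c\<in>S \<Longrightarrow> w\<in>S \<Longrightarrow> a \<oplus> (b \<oplus> c) = d \<Longrightarrow> a \<oplus> (b \<oplus> (c \<oplus> w)) = d \<oplus> w"
  using as by (metis cl)

abbreviation ns where "ns n a \<equiv> nsum add n a"

lemma nsi: assumes "P 0" "P (Suc 0)" "\<And>n. P (Suc n) \<Longrightarrow> P (Suc (Suc n))" shows "P n"
proof -
  have "P n \<and> P (Suc n)" by (induction n) (use assms in auto)
  then show ?thesis by simp
qed

lemma ns1[simp]: "ns 1 a = a" by (simp add: One_nat_def)

lemma ns_S[simp]: "a\<in>S \<Longrightarrow> ns n a \<in> S"
  by (induction n rule: nsi) auto

lemma ns_comm: "a\<in>S \<Longrightarrow> a \<oplus> ns n a = ns n a \<oplus> a"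
  by (induction n rule: nsi) (auto simp: as[symmetric])

lemma ns_SS': "a\<in>S \<Longrightarrow> ns (Suc (Suc n)) a = a \<oplus> ns (Suc n) a"
  using ns_comm by simp

lemma ns_idem: "e\<in>S \<Longrightarrow> e \<oplus> e = e \<Longrightarrow> ns n e = e"
  by (induction n rule: nsi) auto

lemma ns_left: "e\<in>S \<Longrightarrow> a\<in>S \<Longrightarrow> e \<oplus> a = a \<Longrightarrow> e \<oplus> ns n a = ns n a"
  by (induction n rule: nsi) (auto simp: as[symmetric])

lemma ns_right: "e\<in>S \<Longrightarrow> a\<in>S \<Longrightarrow> a \<oplus> e = a \<Longrightarrow> ns n a \<oplus> e = ns n a"
proof (induction n rule: nsi)
  case (3 n)
  then show ?case by (simp add: as)
qed auto

lemma ns_iter: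
  assumes "a\<in>S" "b\<in>S" "t\<in>S" "a \<oplus> t \<oplus> b = t"
  shows "ns n a \<oplus> t \<oplus> ns n b = t"
proof (cases n)
  case 0 then show ?thesis using assms by simp
next
  case (Suc m)
  have "ns (Suc m) a \<oplus> t \<oplus> ns (Suc m) b = t"
  proof (induction m)
    case 0 then show ?case using assms by simp
  next
    case (Suc m)
    have e: "ns (Suc (Suc m)) b = b \<oplus> ns (Suc m) b" using ns_SS' assms by blast
    have "ns (Suc (Suc m)) a \<oplus> t \<oplus> ns (Suc (Suc m)) b
        = ns (Suc m) a \<oplus> (a \<oplus> t \<oplus> b) \<oplus> ns (Suc m) b"
      unfolding e using assms ext3[of a t b "ns (Suc m) b" t] by (simp add: as)
    also have "\<dots> = t" using Suc assms by simp
    finally show ?case .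
  qed
  then show ?thesis using Suc by simp
qed

lemma ns_mul: "a\<in>S \<Longrightarrow> b\<in>S \<Longrightarrow> ns n a \<otimes> b = ns n (a \<otimes> b)"
  by (induction n rule: nsi) (auto simp: dr)

lemma ns_pi: "a\<in>S \<Longrightarrow> ns n a \<in> add_principal_ideal S add a"
  by (induction n rule: nsi) (auto simp: add_principal_ideal_def)

lemma piS_trans: "b \<in> add_principal_ideal S add a \<Longrightarrow> a\<in>S \<Longrightarrow>
   add_principal_ideal S add b \<subseteq> add_principal_ideal S add a"
  by (rule pi_trans) (auto simp: as)

lemma genuine:
  assumes c: "c\<in>S" "x\<in>S" "c \<oplus> x \<oplus> c = c" and t: "t\<in>S" and ci: "c \<in> add_principal_ideal S add t"
  shows "\<exists>p\<in>S. \<exists>q\<in>S. c = p \<oplus> t \<oplus> q"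
proof -
  have cc: "c \<oplus> x \<oplus> c \<oplus> x \<oplus> c = c" using c by simp
  from ci show ?thesis unfolding pi_mem
  proof (elim disjE bexE)
    assume "c = t"
    then show ?thesis using cc c by (intro bexI[of _ "c \<oplus> x"] bexI[of _ "x \<oplus> c"]) (auto simp: as)
  next
    fix s assume s: "s\<in>S" "c = s \<oplus> t"
    have "c \<oplus> x \<oplus> s \<oplus> t \<oplus> (x \<oplus> c) = c \<oplus> x \<oplus> (s \<oplus> t) \<oplus> x \<oplus> c" using c s t by (simp add: as)
    then show ?thesis using cc c s t by (intro bexI[of _ "c \<oplus> x \<oplus> s"] bexI[of _ "x \<oplus> c"]) auto
  next
    fix s assume s: "s\<in>S" "c = t \<oplus> s"
    have "c \<oplus> x \<oplus> t \<oplus> (s \<oplus> x \<oplus> c) = c \<oplus> x \<oplus> (t \<oplus> s) \<oplus> x \<oplus> c" using c s t by (simp add: as)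
    then show ?thesis using cc c s t by (intro bexI[of _ "c \<oplus> x"] bexI[of _ "s \<oplus> x \<oplus> c"]) auto
  next
    fix s s' assume s: "s\<in>S" "s'\<in>S" "c = s \<oplus> t \<oplus> s'"
    have "c \<oplus> x \<oplus> s \<oplus> t \<oplus> (s' \<oplus> x \<oplus> c) = c \<oplus> x \<oplus> (s \<oplus> t \<oplus> s') \<oplus> x \<oplus> c" using c s t by (simp add: as)
    then show ?thesis using cc c s t by (intro bexI[of _ "c \<oplus> x \<oplus> s"] bexI[of _ "s' \<oplus> x \<oplus> c"]) auto
  qed
qed

end


context sr begin

definition reg where "reg a \<longleftrightarrow> a \<in> S \<and> (\<exists>x\<in>S. a \<oplus> x \<oplus> a = a)"

lemma reg_add_regular: "reg a \<longleftrightarrow> a \<in> S \<and> add_regular S add a"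
  unfolding reg_def add_regular_def by metis

lemma mreg1: "reg c \<Longrightarrow> mreg S add c = 1"
  unfolding mreg_def by (rule Least_equality) (auto simp: reg_add_regular)

end

locale ca = sr +
  assumes ca: "completely_archimedean S add mul"
    and E: "add_subsemigroup (add_idempotents S add) S add"
begin

lemma qcr: "a\<in>S \<Longrightarrow> \<exists>n\<ge>1. \<exists>y\<in>S. ns n a \<oplus> y \<oplus> ns n a = ns n a \<and> ns n a \<oplus> y = y \<oplus> ns n a
    \<and> ns n a \<otimes> (ns n a \<oplus> y) = ns n a \<oplus> y"
  using ca unfolding completely_archimedean_def quasi_completely_regular_def completely_regular_def
  by metis

lemma Ecl: "e\<in>S \<Longrightarrow> f\<in>S \<Longrightarrow> e \<oplus> e = e \<Longrightarrow> f \<oplus> f = f \<Longrightarrow> e \<oplus> f \<oplus> (e \<oplus> f) = e \<oplus> f"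
  using E unfolding add_subsemigroup_def add_idempotents_def by auto

lemma kernel:
  assumes c: "reg c" and t: "t\<in>S"
  shows "\<exists>p\<in>S. \<exists>q\<in>S. c = p \<oplus> t \<oplus> q"
proof -
  from c obtain x where x: "x\<in>S" "c\<in>S" "c \<oplus> x \<oplus> c = c" unfolding reg_def by auto
  have "addJstar S add c t" using ca c t x unfolding completely_archimedean_def by auto
  hence "add_principal_ideal S add c = add_principal_ideal S add (ns (mreg S add t) t)"
    unfolding addJstar_def addJ_def mreg1[OF c] by simp
  hence "c \<in> add_principal_ideal S add (ns (mreg S add t) t)" using pi_self by metis
  also have "\<dots> \<subseteq> add_principal_ideal S add t" by (rule piS_trans) (use t ns_pi in auto)
  finally show ?thesis using genuine x t by blast
qed

lemma prim:
  assumes e: "e\<in>S" "e \<oplus> e = e" and f: "f\<in>S" "f \<oplus> f = f" and fe: "e \<oplus> f = f" "f \<oplus> e = f"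
  shows "f = e"
proof -
  have "reg e" unfolding reg_def using e by (intro conjI bexI[of _ e]) auto
  from kernel[OF this f(1)] obtain a b where ab: "a\<in>S" "b\<in>S" "e = a \<oplus> f \<oplus> b" by blast
  define a' where "a' = e \<oplus> a \<oplus> f"
  define b' where "b' = f \<oplus> b \<oplus> e"
  have S': "a'\<in>S" "b'\<in>S" unfolding a'_def b'_def using e f ab by auto
  have a'f: "a' \<oplus> f = a'" unfolding a'_def using e f ab(1,2) by (simp add: as)
  have a'e: "a' \<oplus> e = a'" unfolding a'_def using e f ab(1,2) fe ext2[of f e] by (simp add: as)
  have eb': "e \<oplus> b' = b'" unfolding b'_def using e f ab(1,2) fe ext2[of e f] by (simp add: as)
  have fb': "f \<oplus> b' = b'" unfolding b'_def using e f ab(1,2) fe ext2[of f f] by (simp add: as)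
  have "a' \<oplus> f \<oplus> b' = e \<oplus> (a \<oplus> f \<oplus> b) \<oplus> e" unfolding a'_def b'_def using e f ab(1,2)
    ext2[of f f] by (simp add: as)
  also have "\<dots> = e" by (simp only: ab(3)[symmetric] e(2))
  finally have e1: "a' \<oplus> f \<oplus> b' = e" .
  have e2: "a' \<oplus> e \<oplus> b' = e" using e1 a'e a'f by simp
  obtain n y where ny: "n\<ge>1" "y\<in>S" "ns n a' \<oplus> y \<oplus> ns n a' = ns n a'" "ns n a' \<oplus> y = y \<oplus> ns n a'"
    using qcr[OF S'(1)] by blast
  have it: "ns n a' \<oplus> e \<oplus> ns n b' = e" using ns_iter[OF S' e(1) e2] .
  have ne: "ns n a' \<oplus> e = ns n a'" using ns_right[OF e(1) S'(1) a'e] .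
  have nf: "ns n a' \<oplus> f = ns n a'" using ns_right[OF f(1) S'(1) a'f] .
  define g where "g = ns n a' \<oplus> y"
  have gS: "g\<in>S" unfolding g_def using ny S' by simp
  have "g \<oplus> e = ns n a' \<oplus> y \<oplus> (ns n a' \<oplus> e \<oplus> ns n b')" unfolding g_def using it by simp
  also have "\<dots> = (ns n a' \<oplus> y \<oplus> ns n a') \<oplus> e \<oplus> ns n b'" using ny(2) S' e by (simp add: as)
  also have "\<dots> = e" using ny it by simp
  finally have ge: "g \<oplus> e = e" .
  have gf: "g \<oplus> f = g" unfolding g_def using ny(4) nf ny S' f by (simp add: as)
  have "f = g" using ge gf fe gS e f by (metis as)
  hence "f \<oplus> e = e" using ge by simp
  thus ?thesis using fe by simp
qed

lemma rect:
  assumes e: "e\<in>S" "e \<oplus> e = e" and f: "f\<in>S" "f \<oplus> f = f"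
  shows "e \<oplus> f \<oplus> e = e"
proof -
  have h1: "e \<oplus> f \<oplus> (e \<oplus> f) = e \<oplus> f" using Ecl e f by blast
  have "e \<oplus> f \<oplus> e \<oplus> (e \<oplus> f \<oplus> e) = e \<oplus> f \<oplus> e"
    using Ecl[of "e \<oplus> f" e] h1 e f by simp
  moreover have "e \<oplus> (e \<oplus> f \<oplus> e) = e \<oplus> f \<oplus> e" using e f by (metis as cl)
  moreover have "e \<oplus> f \<oplus> e \<oplus> e = e \<oplus> f \<oplus> e" using e f by (metis as cl)
  ultimately show ?thesis using prim[of e "e \<oplus> f \<oplus> e"] e f by simp
qed

end


context ca begin

lemma grp:
  assumes t: "t\<in>S" and c: "reg c" and uv: "u\<in>S" "v\<in>S" "t = u \<oplus> c \<oplus> v"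
    and N: "y\<in>S" "ns N t \<oplus> y \<oplus> ns N t = ns N t" "ns N t \<oplus> y = y \<oplus> ns N t"
  shows "ns N t \<oplus> y \<oplus> t = t \<and> t \<oplus> (ns N t \<oplus> y) = t"
proof -
  obtain p q where pq: "p\<in>S" "q\<in>S" "c = p \<oplus> t \<oplus> q" using kernel[OF c t] by blast
  define \<alpha> where "\<alpha> = u \<oplus> p"
  define \<beta> where "\<beta> = q \<oplus> v"
  have ab: "\<alpha>\<in>S" "\<beta>\<in>S" unfolding \<alpha>_def \<beta>_def using uv pq by auto
  have "\<alpha> \<oplus> t \<oplus> \<beta> = u \<oplus> (p \<oplus> t \<oplus> q) \<oplus> v" unfolding \<alpha>_def \<beta>_def using uv(1,2) pq(1,2) t by (simp add: as)
  also have "\<dots> = t" using pq(3) uv(3) by simp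
  finally have tab: "\<alpha> \<oplus> t \<oplus> \<beta> = t" .
  define g where "g = ns N t \<oplus> y"
  have gS: "g\<in>S" unfolding g_def using t N by simp
  have gg: "g \<oplus> g = g"
  proof -
    have "g \<oplus> g = (ns N t \<oplus> y \<oplus> ns N t) \<oplus> y" unfolding g_def using t N(1) by (simp add: as)
    thus ?thesis using N(2) g_def by simp
  qed
  have gy: "g = y \<oplus> ns N t" using N(3) g_def by simp
  obtain M z where Mz: "z\<in>S" "ns M \<alpha> \<oplus> z \<oplus> ns M \<alpha> = ns M \<alpha>" "ns M \<alpha> \<oplus> z = z \<oplus> ns M \<alpha>"
    using qcr[OF ab(1)] by blast
  define e where "e = ns M \<alpha> \<oplus> z"
  have eS: "e\<in>S" unfolding e_def using Mz ab by simp
  have ee: "e \<oplus> e = e"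
  proof -
    have "e \<oplus> e = (ns M \<alpha> \<oplus> z \<oplus> ns M \<alpha>) \<oplus> z" unfolding e_def using ab Mz(1) by (simp add: as)
    thus ?thesis using Mz(2) e_def by simp
  qed
  have eM: "e \<oplus> ns M \<alpha> = ns M \<alpha>" unfolding e_def using Mz(2) .
  have it: "ns M \<alpha> \<oplus> t \<oplus> ns M \<beta> = t" using ns_iter[OF ab t tab] .
  have et: "e \<oplus> t = t"
  proof -
    have "e \<oplus> t = e \<oplus> (ns M \<alpha> \<oplus> t \<oplus> ns M \<beta>)" using it by simp
    also have "\<dots> = ns M \<alpha> \<oplus> t \<oplus> ns M \<beta>" using ext2[OF eS _ _ eM] eS ab t by (simp add: as)
    finally show ?thesis using it by simp
  qed
  have eN: "e \<oplus> ns N t = ns N t" using ns_left[OF eS t et] .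
  have eg: "e \<oplus> g = g" unfolding g_def using ext2[OF eS _ N(1) eN] t by simp
  have ege: "e \<oplus> g \<oplus> e = e" using rect[OF eS ee gS gg] .
  have ge: "g \<oplus> e = e" using ege eg by simp
  have gt: "g \<oplus> t = t"
  proof -
    have "g \<oplus> t = g \<oplus> (e \<oplus> t)" using et by simp
    also have "\<dots> = (g \<oplus> e) \<oplus> t" using gS eS t by (simp add: as)
    finally show ?thesis using ge et by simp
  qed
  obtain M' z' where Mz': "z'\<in>S" "ns M' \<beta> \<oplus> z' \<oplus> ns M' \<beta> = ns M' \<beta>" "ns M' \<beta> \<oplus> z' = z' \<oplus> ns M' \<beta>"
    using qcr[OF ab(2)] by blast
  define f where "f = z' \<oplus> ns M' \<beta>"
  have fS: "f\<in>S" unfolding f_def using Mz' ab by simp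
  have ff: "f \<oplus> f = f"
  proof -
    have "f \<oplus> f = z' \<oplus> (ns M' \<beta> \<oplus> z' \<oplus> ns M' \<beta>)" unfolding f_def using ab Mz'(1) by (simp add: as)
    thus ?thesis using Mz'(2) f_def by simp
  qed
  have Mf: "ns M' \<beta> \<oplus> f = ns M' \<beta>"
  proof -
    have "ns M' \<beta> \<oplus> f = ns M' \<beta> \<oplus> z' \<oplus> ns M' \<beta>" unfolding f_def using Mz'(1) ab by (simp add: as)
    thus ?thesis using Mz'(2) by simp
  qed
  have it': "ns M' \<alpha> \<oplus> t \<oplus> ns M' \<beta> = t" using ns_iter[OF ab t tab] .
  have tf: "t \<oplus> f = t"
  proof -
    have "t \<oplus> f = ns M' \<alpha> \<oplus> t \<oplus> ns M' \<beta> \<oplus> f" using it' by simp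
    also have "\<dots> = ns M' \<alpha> \<oplus> t \<oplus> (ns M' \<beta> \<oplus> f)" using fS ab t by (simp add: as)
    finally show ?thesis using Mf it' by simp
  qed
  have Nf: "ns N t \<oplus> f = ns N t" using ns_right[OF fS t tf] .
  have gf: "g \<oplus> f = g"
  proof -
    have "g \<oplus> f = y \<oplus> (ns N t \<oplus> f)" using gy N(1) t fS by (simp add: as)
    thus ?thesis using Nf gy by simp
  qed
  have fgf: "f \<oplus> g \<oplus> f = f" using rect[OF fS ff gS gg] .
  have fg: "f \<oplus> g = f"
  proof -
    have "f \<oplus> g = f \<oplus> (g \<oplus> f)" using gf by simp
    also have "\<dots> = f \<oplus> g \<oplus> f" using fS gS by (simp add: as)
    finally show ?thesis using fgf by simp
  qed
  have tg: "t \<oplus> g = t"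
  proof -
    have "t \<oplus> g = t \<oplus> f \<oplus> g" using tf by simp
    also have "\<dots> = t \<oplus> (f \<oplus> g)" using fS gS t by (simp add: as)
    finally show ?thesis using fg tf by simp
  qed
  show ?thesis unfolding g_def[symmetric] using gt tg by blast
qed

lemma cr:
  assumes t: "t\<in>S" and N: "N\<ge>1" "y\<in>S" "ns N t \<oplus> y \<oplus> ns N t = ns N t" "ns N t \<oplus> y = y \<oplus> ns N t"
    and g: "g = ns N t \<oplus> y" "g \<oplus> t = t" "t \<oplus> g = t"
  shows "\<exists>x\<in>S. t \<oplus> x \<oplus> t = t \<and> t \<oplus> x = x \<oplus> t \<and> t \<oplus> x = g \<and> g \<oplus> x = x"
proof -
  define P where "P = ns N t"
  have PS: "P\<in>S" unfolding P_def using t by simp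
  have gS: "g\<in>S" using g N PS P_def by simp
  have gy: "g = y \<oplus> P" using g N P_def by simp
  define y' where "y' = y \<oplus> P \<oplus> y"
  have y'S: "y'\<in>S" unfolding y'_def using PS N by simp
  have Py': "P \<oplus> y' = g"
  proof -
    have "P \<oplus> y' = (P \<oplus> y \<oplus> P) \<oplus> y" unfolding y'_def using PS N(2) by (simp add: as)
    thus ?thesis using N(3) g(1) P_def by simp
  qed
  have y'P: "y' \<oplus> P = g"
  proof -
    have "y' \<oplus> P = y \<oplus> (P \<oplus> y \<oplus> P)" unfolding y'_def using PS N(2) by (simp add: as)
    thus ?thesis using N(3) gy P_def by simp
  qed
  have gy': "g \<oplus> y' = y'"
  proof -
    have "g \<oplus> y' = y \<oplus> (P \<oplus> y \<oplus> P) \<oplus> y" unfolding y'_def gy using PS N(2) by (simp add: as)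
    thus ?thesis using N(3) y'_def P_def by simp
  qed
  have y'g: "y' \<oplus> g = y'"
  proof -
    have "y' \<oplus> g = y \<oplus> (P \<oplus> y \<oplus> P) \<oplus> y" unfolding y'_def g(1) P_def[symmetric] using PS N(2) by (simp add: as)
    thus ?thesis using N(3) y'_def P_def by simp
  qed
  have tP: "t \<oplus> P = P \<oplus> t" unfolding P_def using ns_comm t by simp
  have ty': "t \<oplus> y' = y' \<oplus> t"
  proof -
    have "t \<oplus> y' = g \<oplus> t \<oplus> y'" using g by simp
    also have "\<dots> = y' \<oplus> (P \<oplus> t) \<oplus> y'" using y'P[symmetric] y'S PS t by (simp add: as)
    also have "\<dots> = y' \<oplus> (t \<oplus> P \<oplus> y')" using tP y'S PS t by (simp add: as)
    also have "\<dots> = y' \<oplus> t \<oplus> g" using Py' y'S PS t gS by (simp add: as)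
    also have "\<dots> = y' \<oplus> (t \<oplus> g)" using y'S gS t by (simp add: as)
    also have "\<dots> = y' \<oplus> t" using g(3) by simp
    finally show ?thesis .
  qed
  show ?thesis
  proof (cases "N = 1")
    case True
    hence P: "P = t" unfolding P_def by simp
    show ?thesis using P Py' y'P gy' y'S g by (intro bexI[of _ y']) auto
  next
    case False
    then obtain m where m: "N = Suc (Suc m)" using N(1) by (metis One_nat_def Suc_le_D Suc_le_lessD le_SucE less_Suc_eq_le nat.exhaust)
    define Q where "Q = ns (Suc m) t"
    have QS: "Q\<in>S" unfolding Q_def using t by simp
    have PQ: "P = Q \<oplus> t" "P = t \<oplus> Q" unfolding P_def Q_def m using ns_SS' t by auto
    have a1: "t \<oplus> (y' \<oplus> Q) = g"
    proof -
      have "t \<oplus> (y' \<oplus> Q) = (t \<oplus> y') \<oplus> Q" using t y'S QS by (simp add: as)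
      also have "\<dots> = y' \<oplus> (t \<oplus> Q)" using ty' t y'S QS by (simp add: as)
      finally show ?thesis using PQ y'P by simp
    qed
    have a2: "y' \<oplus> Q \<oplus> t = g" using PQ y'P y'S QS t by (simp add: as)
    have a3: "g \<oplus> (y' \<oplus> Q) = y' \<oplus> Q" using ext2[OF gS y'S QS gy'] .
    show ?thesis using a1 a2 a3 y'S QS g by (intro bexI[of _ "y' \<oplus> Q"]) auto
  qed
qed

lemma mulg:
  assumes t: "t\<in>S" and N: "y\<in>S" "ns N t \<otimes> (ns N t \<oplus> y) = ns N t \<oplus> y"
    and g: "g = ns N t \<oplus> y" "g \<oplus> g = g"
  shows "t \<otimes> g = g"
proof -
  have gS: "g\<in>S" using g N t by simp
  have "t \<otimes> g \<oplus> t \<otimes> g = t \<otimes> g" using dl[OF t gS gS] g by simp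
  hence "ns N (t \<otimes> g) = t \<otimes> g" using ns_idem t gS by simp
  moreover have "ns N t \<otimes> g = g" using N g by simp
  ultimately show ?thesis using ns_mul[OF t gS] by simp
qed

end


context ca begin

lemma regt:
  assumes t: "t\<in>S" and c: "reg c" and uv: "u\<in>S" "v\<in>S" "t = u \<oplus> c \<oplus> v"
  shows "reg t"
proof -
  obtain N y where N: "N\<ge>1" "y\<in>S" "ns N t \<oplus> y \<oplus> ns N t = ns N t" "ns N t \<oplus> y = y \<oplus> ns N t"
    using qcr[OF t] by blast
  have "ns N t \<oplus> y \<oplus> t = t \<and> t \<oplus> (ns N t \<oplus> y) = t" using grp[OF t c uv N(2-4)] .
  then obtain x where "x\<in>S" "t \<oplus> x \<oplus> t = t" using cr[OF t N refl] by blast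
  thus ?thesis unfolding reg_def using t by blast
qed

lemma reg_rule:
  assumes "a\<in>S" "x\<in>S" "a \<oplus> x \<oplus> a = a"
  shows "a \<oplus> (x \<oplus> a) = a" "\<And>w. w\<in>S \<Longrightarrow> a \<oplus> (x \<oplus> (a \<oplus> w)) = a \<oplus> w"
proof -
  show ax: "a \<oplus> (x \<oplus> a) = a" using assms by (simp add: as)
  show "\<And>w. w\<in>S \<Longrightarrow> a \<oplus> (x \<oplus> (a \<oplus> w)) = a \<oplus> w" using ext3[OF assms(1,2,1) _ ax] by blast
qed

lemma K_add:
  assumes a: "reg a" and s: "s\<in>S"
  shows "reg (a \<oplus> s)" "reg (s \<oplus> a)"
proof -
  obtain x where x: "a\<in>S" "x\<in>S" "a \<oplus> x \<oplus> a = a" using a unfolding reg_def by blast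
  note r = reg_rule[OF x]
  have e1: "a \<oplus> s = (a \<oplus> x) \<oplus> a \<oplus> (x \<oplus> a \<oplus> s)" using x s r by (simp add: as)
  show "reg (a \<oplus> s)" apply (rule regt[where c=a and u="a \<oplus> x" and v="x \<oplus> a \<oplus> s"])
    using e1 x s a by auto
  have e2: "s \<oplus> a = (s \<oplus> a \<oplus> x) \<oplus> a \<oplus> (x \<oplus> a)" using x s r by (simp add: as)
  show "reg (s \<oplus> a)" apply (rule regt[where c=a and u="s \<oplus> a \<oplus> x" and v="x \<oplus> a"])
    using e2 x s a by auto
qed

lemma K_mul:
  assumes a: "reg a" and s: "s\<in>S"
  shows "reg (a \<otimes> s)" "reg (s \<otimes> a)"
proof -
  obtain x where x: "a\<in>S" "x\<in>S" "a \<oplus> x \<oplus> a = a" using a unfolding reg_def by blast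
  have "a \<otimes> s \<oplus> x \<otimes> s \<oplus> a \<otimes> s = (a \<oplus> x \<oplus> a) \<otimes> s" using x(1,2) s by (simp add: dr)
  hence "a \<otimes> s \<oplus> x \<otimes> s \<oplus> a \<otimes> s = a \<otimes> s" using x by simp
  thus "reg (a \<otimes> s)" unfolding reg_def using x s by auto
  have "s \<otimes> a \<oplus> s \<otimes> x \<oplus> s \<otimes> a = s \<otimes> (a \<oplus> x \<oplus> a)" using x(1,2) s by (simp add: dl)
  hence "s \<otimes> a \<oplus> s \<otimes> x \<oplus> s \<otimes> a = s \<otimes> a" using x by simp
  thus "reg (s \<otimes> a)" unfolding reg_def using x s by auto
qed

lemma K_cr:
  assumes a: "reg a"
  shows "\<exists>x. reg x \<and> a \<oplus> x \<oplus> a = a \<and> a \<oplus> x = x \<oplus> a \<and> a \<otimes> (a \<oplus> x) = a \<oplus> x"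
proof -
  obtain x0 where x: "a\<in>S" "x0\<in>S" "a \<oplus> x0 \<oplus> a = a" using a unfolding reg_def by blast
  note r = reg_rule[OF x]
  have u: "a = (a \<oplus> x0) \<oplus> a \<oplus> (x0 \<oplus> a)" using x r by (simp add: as)
  obtain N y where N: "N\<ge>1" "y\<in>S" "ns N a \<oplus> y \<oplus> ns N a = ns N a" "ns N a \<oplus> y = y \<oplus> ns N a"
     "ns N a \<otimes> (ns N a \<oplus> y) = ns N a \<oplus> y"
    using qcr[OF x(1)] by blast
  define g where "g = ns N a \<oplus> y"
  have gS: "g\<in>S" unfolding g_def using x N by simp
  have gg: "g \<oplus> g = g"
  proof -
    have "g \<oplus> g = (ns N a \<oplus> y \<oplus> ns N a) \<oplus> y" unfolding g_def using x N(2) by (simp add: as)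
    thus ?thesis using N(3) g_def by simp
  qed
  have "g \<oplus> a = a \<and> a \<oplus> g = a" unfolding g_def
    using grp[OF x(1) a _ _ u N(2-4)] x by simp
  then obtain z where z: "z\<in>S" "a \<oplus> z \<oplus> a = a" "a \<oplus> z = z \<oplus> a" "a \<oplus> z = g" "g \<oplus> z = z"
    using cr[OF x(1) N(1-4) g_def] by blast
  have rg: "reg g" unfolding reg_def using gS gg by (intro conjI bexI[of _ g]) auto
  have "reg z" using K_add(1)[OF rg z(1)] z(5) by simp
  moreover have "a \<otimes> g = g" using mulg[OF x(1) N(2) N(5) g_def gg] .
  ultimately show ?thesis using z by (intro exI[of _ z]) auto
qed

definition KK where "KK = {a. reg a}"

lemma KK_S: "KK \<subseteq> S" unfolding KK_def reg_def by auto

lemma KK_in: "a \<in> KK \<longleftrightarrow> reg a" unfolding KK_def by simp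

lemma KK_dir:
  assumes a: "reg a" and b: "reg b"
  shows "add_principal_ideal KK add a \<subseteq> add_principal_ideal KK add b"
proof -
  obtain x where x: "a\<in>S" "x\<in>S" "a \<oplus> x \<oplus> a = a" using a unfolding reg_def by blast
  have bS: "b\<in>S" using b unfolding reg_def by simp
  obtain p q where pq: "p\<in>S" "q\<in>S" "a = p \<oplus> b \<oplus> q" using kernel[OF a bS] by blast
  have "(a \<oplus> x \<oplus> p) \<oplus> b \<oplus> (q \<oplus> x \<oplus> a) = a \<oplus> x \<oplus> (p \<oplus> b \<oplus> q) \<oplus> x \<oplus> a"
    using x pq(1,2) bS by (simp add: as)
  also have "\<dots> = a \<oplus> x \<oplus> a \<oplus> x \<oplus> a" using pq(3)[symmetric] by simp
  also have "\<dots> = a" using x(3) by simp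
  finally have eq: "a = (a \<oplus> x \<oplus> p) \<oplus> b \<oplus> (q \<oplus> x \<oplus> a)" by simp
  have m1: "a \<oplus> x \<oplus> p \<in> KK" unfolding KK_in using K_add(1)[OF a] x pq by (simp add: as)
  have m2: "q \<oplus> x \<oplus> a \<in> KK" unfolding KK_in using K_add(2)[OF a] x pq by simp
  have "a \<in> add_principal_ideal KK add b" unfolding pi_mem using m1 m2 eq by blast
  moreover have "b \<in> KK" using b KK_in by simp
  ultimately show ?thesis
    by (intro pi_trans) (use K_add KK_S KK_in in \<open>auto simp: as reg_def\<close>)
qed

lemma bwd: "\<exists>K. nil_extension S K add mul \<and> rectangular_skew_ring K add mul"
proof (intro exI[of _ KK] conjI)
  have cl1: "\<And>a b. a\<in>KK \<Longrightarrow> b\<in>KK \<Longrightarrow> a \<oplus> b \<in> KK \<and> a \<otimes> b \<in> KK"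
    using K_add K_mul KK_S unfolding KK_in by (auto simp: reg_def)
  have KS: "\<And>a. a \<in> KK \<Longrightarrow> a \<in> S" using KK_S by blast
  have smK: "semiring KK add mul"
    unfolding semiring_def using cl1 KS by (auto simp: as asm dl dr)
  have bi: "bi_ideal KK S add mul"
    unfolding bi_ideal_def using K_add K_mul KK_S by (auto simp: KK_in)
  have nn: "\<forall>a\<in>S. \<exists>n\<ge>1. ns n a \<in> KK"
  proof
    fix a assume a: "a\<in>S"
    obtain n y where "n\<ge>1" "y\<in>S" "ns n a \<oplus> y \<oplus> ns n a = ns n a" using qcr[OF a] by blast
    thus "\<exists>n\<ge>1. ns n a \<in> KK" unfolding KK_in reg_def using a by auto
  qed
  show "nil_extension S KK add mul" unfolding nil_extension_def using KK_S smK bi nn by blast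
  have crK: "\<forall>a\<in>KK. completely_regular KK add mul a"
  proof
    fix a assume "a \<in> KK"
    then obtain x where "reg x" "a \<oplus> x \<oplus> a = a" "a \<oplus> x = x \<oplus> a" "a \<otimes> (a \<oplus> x) = a \<oplus> x"
      using K_cr KK_in by blast
    thus "completely_regular KK add mul a" unfolding completely_regular_def KK_in
      by (intro bexI[of _ x]) (auto simp: KK_in)
  qed
  have JK: "\<forall>a\<in>KK. \<forall>b\<in>KK. addJ KK add a b"
    unfolding addJ_def using KK_dir KK_in by blast
  have EK: "add_subsemigroup (add_idempotents KK add) KK add"
    unfolding add_subsemigroup_def add_idempotents_def
    using cl1 Ecl KK_S by blast
  show "rectangular_skew_ring KK add mul"
    unfolding rectangular_skew_ring_def completely_simple_def using smK crK JK EK by blast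
qed

end


context sr begin

lemma fwd:
  assumes ne: "nil_extension S K add mul" and rs: "rectangular_skew_ring K add mul"
  shows "completely_archimedean S add mul \<and> add_subsemigroup (add_idempotents S add) S add"
proof -
  have KS: "K \<subseteq> S" and bi: "bi_ideal K S add mul" and nn: "\<forall>a\<in>S. \<exists>n\<ge>1. ns n a \<in> K"
    using ne unfolding nil_extension_def by auto
  have crK: "\<forall>a\<in>K. completely_regular K add mul a" and JK: "\<forall>a\<in>K. \<forall>b\<in>K. addJ K add a b"
    and EK: "add_subsemigroup (add_idempotents K add) K add"
    using rs unfolding rectangular_skew_ring_def completely_simple_def by auto
  have KS': "\<And>a. a\<in>K \<Longrightarrow> a\<in>S" using KS by blast
  have regK: "a \<in> K" if a: "a\<in>S" "x\<in>S" "a \<oplus> x \<oplus> a = a" for a x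
  proof -
    define e where "e = a \<oplus> x"
    have eS: "e\<in>S" unfolding e_def using a by simp
    have "e \<oplus> e = (a \<oplus> x \<oplus> a) \<oplus> x" unfolding e_def using a(1,2) by (simp add: as)
    hence ee: "e \<oplus> e = e" using a(3) e_def by simp
    obtain n where "ns n e \<in> K" using nn eS by blast
    hence eK: "e \<in> K" using ns_idem[OF eS ee] by simp
    have "e \<oplus> a \<in> K" using bi eK a(1) unfolding bi_ideal_def by blast
    thus ?thesis using a(3) e_def by simp
  qed
  have Kreg: "\<exists>x\<in>S. a \<oplus> x \<oplus> a = a" if "a\<in>K" for a
    using crK that KS' unfolding completely_regular_def by metis
  have mr: "ns (mreg S add a) a \<in> K" if a: "a\<in>S" for a
  proof -
    obtain n where n: "n\<ge>1" "ns n a \<in> K" using nn a by blast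
    have "add_regular S add (ns n a)" unfolding add_regular_def using Kreg[OF n(2)] by metis
    hence "\<exists>n. n\<ge>1 \<and> add_regular S add (ns n a)" using n by blast
    hence "mreg S add a \<ge> 1 \<and> add_regular S add (ns (mreg S add a) a)"
      unfolding mreg_def by (rule LeastI_ex)
    then obtain x where "x\<in>S" "ns (mreg S add a) a = ns (mreg S add a) a \<oplus> x \<oplus> ns (mreg S add a) a"
      unfolding add_regular_def by blast
    thus ?thesis using regK a by simp
  qed
  have qcr: "quasi_completely_regular S add mul"
    unfolding quasi_completely_regular_def
  proof (intro conjI ballI)
    show "semiring S add mul" by (rule sr)
    fix a assume a: "a\<in>S"
    obtain n where n: "n\<ge>1" "ns n a \<in> K" using nn a by blast
    hence "completely_regular S add mul (ns n a)" using crK KS unfolding completely_regular_def by blast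
    thus "\<exists>n\<ge>1. completely_regular S add mul (ns n a)" using n by blast
  qed
  have Jdir: "add_principal_ideal S add u \<subseteq> add_principal_ideal S add v" if uv: "u\<in>K" "v\<in>K" for u v
  proof -
    have "add_principal_ideal K add u = add_principal_ideal K add v" using JK uv unfolding addJ_def by blast
    hence "u \<in> add_principal_ideal K add v" using pi_self by metis
    hence "u \<in> add_principal_ideal S add v" using pi_mono[OF KS] by blast
    thus ?thesis using piS_trans KS' uv by blast
  qed
  have J: "\<forall>a\<in>S. \<forall>b\<in>S. addJstar S add a b"
    unfolding addJstar_def addJ_def using mr Jdir KS' by blast
  have E: "add_subsemigroup (add_idempotents S add) S add"
    unfolding add_subsemigroup_def
  proof (intro conjI ballI)
    show "add_idempotents S add \<subseteq> S" unfolding add_idempotents_def by auto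
    fix e f assume ef: "e \<in> add_idempotents S add" "f \<in> add_idempotents S add"
    have "e \<in> K" "f \<in> K" using ef regK unfolding add_idempotents_def by auto
    hence "e \<in> add_idempotents K add" "f \<in> add_idempotents K add" using ef unfolding add_idempotents_def by auto
    hence "e \<oplus> f \<in> add_idempotents K add" using EK unfolding add_subsemigroup_def by blast
    thus "e \<oplus> f \<in> add_idempotents S add" using KS unfolding add_idempotents_def by auto
  qed
  show ?thesis unfolding completely_archimedean_def using qcr J E by blast
qed

end

theorem theorem3p5:
  fixes S :: "'a set" and add mul :: "'a \<Rightarrow> 'a \<Rightarrow> 'a"
  assumes "semiring S add mul"
  shows "(\<exists>K. nil_extension S K add mul \<and> rectangular_skew_ring K add mul) \<longleftrightarrow>
         (completely_archimedean S add mul \<and>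
          add_subsemigroup (add_idempotents S add) S add)"
proof
  assume "\<exists>K. nil_extension S K add mul \<and> rectangular_skew_ring K add mul"
  then show "completely_archimedean S add mul \<and> add_subsemigroup (add_idempotents S add) S add"
    using sr.fwd[of S add mul] assms sr.intro by blast
next
  assume h: "completely_archimedean S add mul \<and> add_subsemigroup (add_idempotents S add) S add"
  have "ca S add mul" using assms h by (simp add: ca_def ca_axioms_def sr_def)
  then show "\<exists>K. nil_extension S K add mul \<and> rectangular_skew_ring K add mul" by (rule ca.bwd)
qed


end
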